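(* The substring complexity $\delta$ satisfies the following upper bounds on its sensitivity: substitutions: $\mathsf{MS}_{\mathrm{sub}}(\delta,n) \leq 2$ and $\mathsf{AS}_{\mathrm{sub}}(\delta,n) \leq 1$; insertions: $\mathsf{MS}_{\mathrm{ins}}(\delta,n) \leq 2$ and $\mathsf{AS}_{\mathrm{ins}}(\delta,n) \leq 1$; deletions: $\limsup_{n\to\infty}\mathsf{MS}_{\mathrm{del}}(\delta,n) \leq 1.5$ and $\limsup_{n\to\infty}\mathsf{AS}_{\mathrm{del}}(\delta,n) \leq 1$.
   Context: Strings are finite sequences over an alphabet $\Sigma$; $\Sigma^n$ is the set of strings of length $n$. $\mathsf{ed}(T,S)$ is the edit distance (minimum number of single-character substitutions, insertions, deletions turning $T$ into $S$). For a measure $C$ assigning a number $C(T)$ to each string, define $\mathsf{MS}_{\mathrm{sub}}(C,n)=\max_{T\in\Sigma^n}\{C(T')/C(T): T'\in\Sigma^n,\ \mathsf{ed}(T,T')=1\}$, $\mathsf{MS}_{\mathrm{ins}}(C,n)$ and $\mathsf{MS}_{\mathrm{del}}(C,n)$ the same with $T'\in\Sigma^{n+1}$, resp. $T'\in\Sigma^{n-1}$; and $\mathsf{AS}_{\mathrm{sub}},\mathsf{AS}_{\mathrm{ins}},\mathsf{AS}_{\mathrm{del}}$ the same with $C(T')-C(T)$ in place of $C(T')/C(T)$. For a string $T$ of length $n$, $\mathsf{Substr}(T,k)$ is the number of distinct substrings of length $k$ of $T$, and the substring complexity is $\delta(T)=\max_{1\le k\le n}\mathsf{Substr}(T,k)/k$.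 *)

theory Defs
  imports Complex_Main "HOL-Library.Extended_Real" "HOL-Library.Liminf_Limsup"
begin

definition edit1 :: "'a list \<Rightarrow> 'a list \<Rightarrow> bool" where
  "edit1 T S \<longleftrightarrow>
     (\<exists>u v a b. T = u @ a # v \<and> S = u @ b # v) \<or>
     (\<exists>u v b. T = u @ v \<and> S = u @ b # v) \<or>
     (\<exists>u v a. T = u @ a # v \<and> S = u @ v)"

definition ed :: "'a list \<Rightarrow> 'a list \<Rightarrow> nat" where
  "ed T S = (LEAST k. (edit1 ^^ k) T S)"

definition Substr :: "'a list \<Rightarrow> nat \<Rightarrow> nat" where
  "Substr T k = card {take k (drop i T) | i. i + k \<le> length T}"

definition delta :: "'a list \<Rightarrow> real" where
  "delta T = (if T = [] then 0
              else Max {real (Substr T k) / real k | k. k \<in> {1..length T}})"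

definition MS_sub :: "('a list \<Rightarrow> real) \<Rightarrow> nat \<Rightarrow> ereal" where
  "MS_sub C n = Sup {ereal (C T' / C T) | T T'. length T = n \<and> length T' = n \<and> ed T T' = 1}"
definition MS_ins :: "('a list \<Rightarrow> real) \<Rightarrow> nat \<Rightarrow> ereal" where
  "MS_ins C n = Sup {ereal (C T' / C T) | T T'. length T = n \<and> length T' = n + 1 \<and> ed T T' = 1}"
definition MS_del :: "('a list \<Rightarrow> real) \<Rightarrow> nat \<Rightarrow> ereal" where
  "MS_del C n = Sup {ereal (C T' / C T) | T T'. length T = n \<and> length T' + 1 = n \<and> ed T T' = 1}"
definition AS_sub :: "('a list \<Rightarrow> real) \<Rightarrow> nat \<Rightarrow> ereal" where
  "AS_sub C n = Sup {ereal (C T' - C T) | T T'. length T = n \<and> length T' = n \<and> ed T T' = 1}"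
definition AS_ins :: "('a list \<Rightarrow> real) \<Rightarrow> nat \<Rightarrow> ereal" where
  "AS_ins C n = Sup {ereal (C T' - C T) | T T'. length T = n \<and> length T' = n + 1 \<and> ed T T' = 1}"
definition AS_del :: "('a list \<Rightarrow> real) \<Rightarrow> nat \<Rightarrow> ereal" where
  "AS_del C n = Sup {ereal (C T' - C T) | T T'. length T = n \<and> length T' + 1 = n \<and> ed T T' = 1}"

end

theory Submission imports Defs begin

lemma edit1_ex: "\<exists>k. (edit1 ^^ k) T T'"
proof -
  have d: "(edit1 ^^ length T) T []" for T :: "'a list"
  proof (induction T)
    case Nil then show ?case by simp
  next
    case (Cons a T)
    have "edit1 (a # T) T" unfolding edit1_def by (metis append_Nil)
    then show ?case using Cons by (metis length_Cons relpowp_Suc_I2)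
  qed
  have i: "(edit1 ^^ length T') [] T'" for T' :: "'a list"
  proof (induction T')
    case Nil then show ?case by simp
  next
    case (Cons b T)
    have "edit1 T (b # T)" unfolding edit1_def by (metis append_Nil)
    then show ?case using Cons by (metis length_Cons relpowp_Suc_I)
  qed
  have "(edit1 ^^ (length T + length T')) T T'"
    unfolding relpowp_add using d i by blast
  then show ?thesis by blast
qed

lemma ed1_edit1: assumes "ed T T' = 1" shows "edit1 T T'"
proof -
  have "(edit1 ^^ ed T T') T T'" unfolding ed_def by (rule LeastI_ex[OF edit1_ex])
  then show ?thesis using assms by auto
qed

lemma edit1_split: assumes "edit1 T T'"
  shows "\<exists>u m v m'. T = u @ m @ v \<and> T' = u @ m' @ v \<and> length m' \<le> 1"
proof -
  consider (s) u v a b where "T = u @ a # v" "T' = u @ b # v"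
    | (i) u v b where "T = u @ v" "T' = u @ b # v"
    | (d) u v a where "T = u @ a # v" "T' = u @ v"
    using assms unfolding edit1_def by blast
  then show ?thesis
  proof cases
    case s
    then have "T = u @ [a] @ v \<and> T' = u @ [b] @ v \<and> length [b] \<le> 1" by simp
    then show ?thesis by blast
  next
    case i
    then have "T = u @ [] @ v \<and> T' = u @ [b] @ v \<and> length [b] \<le> 1" by simp
    then show ?thesis by blast
  next
    case d
    then have "T = u @ [a] @ v \<and> T' = u @ [] @ v \<and> length ([]::'a list) \<le> 1" by simp
    then show ?thesis by blast
  qed
qed

lemma edit1_del_set: assumes "edit1 T T'" "length T' + 1 = length T"
  shows "set T' \<subseteq> set T"
proof -
  consider (s) u v a b where "T = u @ a # v" "T' = u @ b # v"
    | (i) u v b where "T = u @ v" "T' = u @ b # v"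
    | (d) u v a where "T = u @ a # v" "T' = u @ v"
    using assms(1) unfolding edit1_def by blast
  then show ?thesis
  proof cases
    case s then show ?thesis using assms(2) by simp
  next
    case i then show ?thesis using assms(2) by simp
  next
    case d then show ?thesis by auto
  qed
qed

lemma Substr_img: "Substr T k = card ((\<lambda>i. take k (drop i T)) ` {i. i + k \<le> length T})"
  unfolding Substr_def by (simp add: setcompr_eq_image)

lemma Substr_edit:
  assumes T: "T = u @ m @ v" and T': "T' = u @ m' @ v" and m': "length m' \<le> 1"
  shows "Substr T' k \<le> Substr T k + k"
proof -
  let ?W = "\<lambda>S i. take k (drop i S)"
  let ?A = "?W T ` {i. i + k \<le> length T}"
  let ?B = "?W T' ` {length u + 1 - k..<length u + length m'}"
  have sub: "?W T' ` {i. i + k \<le> length T'} \<subseteq> ?A \<union> ?B"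
  proof
    fix x assume "x \<in> ?W T' ` {i. i + k \<le> length T'}"
    then obtain i where i: "i + k \<le> length T'" and x: "x = ?W T' i" by auto
    show "x \<in> ?A \<union> ?B"
    proof (cases "i + k \<le> length u")
      case True
      have "?W T' i = ?W T i" using True unfolding T T' by (simp add: drop_append take_append)
      moreover have "i + k \<le> length T" using True T by simp
      ultimately show ?thesis using x by blast
    next
      case F1: False
      show ?thesis
      proof (cases "length u + length m' \<le> i")
        case True
        define j where "j = i - length m' + length m"
        have e1: "drop i T' = drop (i - length u - length m') v" using True unfolding T'
          by (simp add: drop_append add.commute)
        have e2: "drop j T = drop (i - length u - length m') v" using True unfolding T j_def
          by (simp add: drop_append add.commute)
        have "?W T' i = ?W T j" using e1 e2 by simp
        moreover have "j + k \<le> length T" using i True unfolding T T' j_def by simp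
        ultimately show ?thesis using x by blast
      next
        case False
        then have "i \<in> {length u + 1 - k..<length u + length m'}" using F1 by auto
        then show ?thesis using x by blast
      qed
    qed
  qed
  have "finite {i::nat. i + k \<le> length T}" by (rule finite_subset[of _ "{..length T}"]) auto
  then have finA: "finite ?A" by simp
  have finB: "finite ?B" by simp
  have "Substr T' k \<le> card (?A \<union> ?B)" unfolding Substr_img
    using card_mono[OF _ sub] finA finB by blast
  also have "\<dots> \<le> card ?A + card ?B" by (rule card_Un_le)
  also have "card ?B \<le> card {length u + 1 - k..<length u + length m'}" by (rule card_image_le) simp
  also have "\<dots> \<le> k" using m' by simp
  finally have "Substr T' k \<le> card ?A + k" by simp
  moreover have "Substr T k = card ?A" by (rule Substr_img)
  ultimately show ?thesis by simp
qed

lemma delta_set_fin: "finite {real (Substr T k) / real k | k. k \<in> {1..length T}}"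
  by (simp add: setcompr_eq_image)

lemma delta_ge: assumes "1 \<le> k" "k \<le> length T" shows "real (Substr T k) / real k \<le> delta T"
proof -
  have ne: "T \<noteq> []" using assms by auto
  have mem: "real (Substr T k) / real k \<in> {real (Substr T k) / real k | k. k \<in> {1..length T}}"
    using assms by (intro CollectI exI[of _ k]) auto
  show ?thesis unfolding delta_def using ne Max_ge[OF delta_set_fin mem] by simp
qed

lemma delta_le: assumes "T \<noteq> []" "\<And>k. 1 \<le> k \<Longrightarrow> k \<le> length T \<Longrightarrow> real (Substr T k) / real k \<le> c"
  shows "delta T \<le> c"
proof -
  have "1 \<le> length T" using assms(1) by (cases T) auto
  then have "real (Substr T 1) / real 1 \<in> {real (Substr T k) / real k | k. k \<in> {1..length T}}"
    by (intro CollectI exI[of _ 1]) auto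
  then have ne: "{real (Substr T k) / real k | k. k \<in> {1..length T}} \<noteq> {}" by blast
  have "\<forall>x\<in>{real (Substr T k) / real k | k. k \<in> {1..length T}}. x \<le> c" using assms(2) by auto
  then show ?thesis unfolding delta_def using assms(1) Max_le_iff[OF delta_set_fin ne] by simp
qed

lemma delta_nonneg: "0 \<le> delta T"
proof (cases "T = []")
  case True then show ?thesis by (simp add: delta_def)
next
  case False
  then have "1 \<le> length T" by (cases T) auto
  then have "real (Substr T 1) / real 1 \<le> delta T" by (intro delta_ge) auto
  moreover have "0 \<le> real (Substr T 1) / real 1" by simp
  ultimately show ?thesis by linarith
qed

lemma Substr1: "Substr T 1 = card (set T)"
proof -
  have "{take 1 (drop i T) | i. i + 1 \<le> length T} = (\<lambda>x. [x]) ` set T"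
  proof (rule equalityI; rule subsetI)
    fix y assume "y \<in> {take 1 (drop i T) | i. i + 1 \<le> length T}"
    then obtain i where i: "i + 1 \<le> length T" "y = take 1 (drop i T)" by blast
    then have "y = [T ! i]"
      by (simp add: Cons_nth_drop_Suc[symmetric])
    then show "y \<in> (\<lambda>x. [x]) ` set T" using i by auto
  next
    fix y assume "y \<in> (\<lambda>x. [x]) ` set T"
    then obtain x where x: "x \<in> set T" "y = [x]" by blast
    then obtain i where "i < length T" "T ! i = x" by (auto simp: in_set_conv_nth)
    then have "y = take 1 (drop i T) \<and> i + 1 \<le> length T" using x
      by (simp add: Cons_nth_drop_Suc[symmetric])
    then show "y \<in> {take 1 (drop i T) | i. i + 1 \<le> length T}" by blast
  qed
  then show ?thesis unfolding Substr_def by (simp add: card_image inj_on_def)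
qed

lemma delta_ge1: assumes "T \<noteq> []" shows "1 \<le> delta T"
proof -
  have "real (Substr T 1) / real 1 \<le> delta T" using assms by (intro delta_ge) (auto simp: Suc_leI)
  moreover have "1 \<le> Substr T 1" using assms unfolding Substr1 by (simp add: Suc_leI card_gt_0_iff)
  ultimately show ?thesis by simp
qed

lemma delta_unary: assumes "\<forall>x\<in>set T. x = c" shows "delta T \<le> 1"
proof (cases "T = []")
  case True then show ?thesis by (simp add: delta_def)
next
  case False
  show ?thesis
  proof (rule delta_le[OF False])
    fix k :: nat assume k: "1 \<le> k" "k \<le> length T"
    have "{take k (drop i T) | i. i + k \<le> length T} \<subseteq> {replicate k c}"
    proof safe
      fix i assume "i + k \<le> length T"
      moreover have "\<forall>x\<in>set (take k (drop i T)). x = c" using assms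
        by (meson in_set_dropD in_set_takeD)
      ultimately show "take k (drop i T) = replicate k c"
        by (intro replicate_eqI) auto
    qed
    then have "Substr T k \<le> card {replicate k c}" unfolding Substr_def
      by (intro card_mono) auto
    then have "Substr T k \<le> 1" by simp
    then show "real (Substr T k) / real k \<le> 1" using k by (simp add: divide_le_eq_1)
  qed
qed

lemma delta_edit1: assumes "edit1 T T'" shows "delta T' \<le> delta T + 1"
proof (cases "T' = []")
  case True then show ?thesis using delta_nonneg[of T] by (simp add: delta_def)
next
  case False
  obtain u m v m' where s: "T = u @ m @ v" "T' = u @ m' @ v" "length m' \<le> 1"
    using edit1_split[OF assms] by blast
  show ?thesis
  proof (rule delta_le[OF False])
    fix k :: nat assume k: "1 \<le> k" "k \<le> length T'"
    show "real (Substr T' k) / real k \<le> delta T + 1"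
    proof (cases "k \<le> length T")
      case True
      have "Substr T' k \<le> Substr T k + k" by (rule Substr_edit[OF s])
      then have "real (Substr T' k) \<le> real (Substr T k + k)" by (simp only: of_nat_le_iff)
      then have "real (Substr T' k) \<le> real (Substr T k) + real k" by simp
      then have "real (Substr T' k) / real k \<le> (real (Substr T k) + real k) / real k"
        by (rule divide_right_mono) simp
      also have "\<dots> = real (Substr T k) / real k + 1" using k by (simp add: add_divide_distrib)
      finally have "real (Substr T' k) / real k \<le> real (Substr T k) / real k + 1" .
      also have "\<dots> \<le> delta T + 1" using delta_ge[OF k(1) True] by simp
      finally show ?thesis .
    next
      case False
      have "length T' \<le> length T + 1" using s by simp
      then have "{i. i + k \<le> length T'} \<subseteq> {0}" using False by auto
      then have "card {i. i + k \<le> length T'} \<le> 1" using card_mono[of "{0::nat}"] by simp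
      moreover have "finite {i. i + k \<le> length T'}" using \<open>{i. i + k \<le> length T'} \<subseteq> {0}\<close> finite_subset by blast
      ultimately have "Substr T' k \<le> 1" unfolding Substr_img using card_image_le[of "{i. i + k \<le> length T'}" "\<lambda>i. take k (drop i T')"] by linarith
      then have "real (Substr T' k) / real k \<le> 1" using k by (simp add: divide_le_eq_1)
      then show ?thesis using delta_nonneg[of T] by simp
    qed
  qed
qed


lemma ratio2: assumes "ed T T' = 1" "T \<noteq> []" shows "delta T' / delta T \<le> 2"
proof -
  have a: "1 \<le> delta T" by (rule delta_ge1[OF assms(2)])
  have b: "delta T' \<le> delta T + 1" by (rule delta_edit1[OF ed1_edit1[OF assms(1)]])
  have "delta T' \<le> 2 * delta T" using a b by linarith
  then show ?thesis using a by (simp add: divide_le_eq)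
qed

lemma diff1: assumes "ed T T' = 1" shows "delta T' - delta T \<le> 1"
  using delta_edit1[OF ed1_edit1[OF assms]] by linarith

lemma ratio_del: assumes "ed T T' = 1" "length T' + 1 = length T" shows "delta T' / delta T \<le> 3/2"
proof -
  have e: "edit1 T T'" by (rule ed1_edit1[OF assms(1)])
  have ne: "T \<noteq> []" using assms(2) by auto
  have a: "1 \<le> delta T" by (rule delta_ge1[OF ne])
  have b: "delta T' \<le> delta T + 1" by (rule delta_edit1[OF e])
  have "delta T' \<le> 3/2 * delta T"
  proof (cases "2 \<le> delta T")
    case True then show ?thesis using b by linarith
  next
    case False
    have "1 \<le> length T" using ne by (cases T) auto
    then have "real (Substr T 1) / real 1 \<le> delta T" by (intro delta_ge) auto
    then have "card (set T) < 2" using False unfolding Substr1 by simp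
    then have "card (set T) \<le> 1" by simp
    moreover have "hd T \<in> set T" using ne by simp
    ultimately have "set T = {hd T}"
      by (metis card_1_singletonE card_0_eq finite_set empty_iff le_Suc_eq One_nat_def le_zero_eq singletonD)
    then have "\<forall>x\<in>set T'. x = hd T" using edit1_del_set[OF e assms(2)] by auto
    then have "delta T' \<le> 1" by (rule delta_unary)
    then show ?thesis using a by linarith
  qed
  then show ?thesis using a by (simp add: divide_le_eq)
qed

lemma Sup_le_helper: "(\<And>T T'. P T T' \<Longrightarrow> ereal (f T T') \<le> c) \<Longrightarrow> Sup {ereal (f T T') | T T'. P T T'} \<le> c"
  by (auto intro!: Sup_least)

theorem mainTheorem2:
  shows "(\<forall>n\<ge>1. MS_sub (delta :: 'a list \<Rightarrow> real) n \<le> 2 \<and> AS_sub (delta :: 'a list \<Rightarrow> real) n \<le> 1 \<and>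
                MS_ins (delta :: 'a list \<Rightarrow> real) n \<le> 2 \<and> AS_ins (delta :: 'a list \<Rightarrow> real) n \<le> 1) \<and>
         limsup (\<lambda>n. MS_del (delta :: 'a list \<Rightarrow> real) n) \<le> ereal (3/2) \<and>
         limsup (\<lambda>n. AS_del (delta :: 'a list \<Rightarrow> real) n) \<le> 1"
proof (intro conjI allI impI)
  fix n :: nat assume n: "1 \<le> n"
  show "MS_sub (delta :: 'a list \<Rightarrow> real) n \<le> 2" unfolding MS_sub_def
  proof (rule Sup_le_helper)
    fix T T' :: "'a list" assume a: "length T = n \<and> length T' = n \<and> ed T T' = 1"
    then have "T \<noteq> []" using n by auto
    then show "ereal (delta T' / delta T) \<le> 2" using ratio2[of T T'] a by simp
  qed
  show "MS_ins (delta :: 'a list \<Rightarrow> real) n \<le> 2" unfolding MS_ins_def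
  proof (rule Sup_le_helper)
    fix T T' :: "'a list" assume a: "length T = n \<and> length T' = n + 1 \<and> ed T T' = 1"
    then have "T \<noteq> []" using n by auto
    then show "ereal (delta T' / delta T) \<le> 2" using ratio2[of T T'] a by simp
  qed
  show "AS_sub (delta :: 'a list \<Rightarrow> real) n \<le> 1" unfolding AS_sub_def
  proof (rule Sup_le_helper)
    fix T T' :: "'a list" assume a: "length T = n \<and> length T' = n \<and> ed T T' = 1"
    then show "ereal (delta T' - delta T) \<le> 1" using diff1[of T T'] by simp
  qed
  show "AS_ins (delta :: 'a list \<Rightarrow> real) n \<le> 1" unfolding AS_ins_def
  proof (rule Sup_le_helper)
    fix T T' :: "'a list" assume a: "length T = n \<and> length T' = n + 1 \<and> ed T T' = 1"
    then show "ereal (delta T' - delta T) \<le> 1" using diff1[of T T'] by simp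
  qed
next
  have "MS_del (delta :: 'a list \<Rightarrow> real) n \<le> ereal (3/2)" for n unfolding MS_del_def
  proof (rule Sup_le_helper)
    fix T T' :: "'a list" assume a: "length T = n \<and> length T' + 1 = n \<and> ed T T' = 1"
    then show "ereal (delta T' / delta T) \<le> ereal (3/2)" using ratio_del[of T T'] by simp
  qed
  then show "limsup (\<lambda>n. MS_del (delta :: 'a list \<Rightarrow> real) n) \<le> ereal (3/2)"
    by (intro Limsup_bounded) simp
next
  have "AS_del (delta :: 'a list \<Rightarrow> real) n \<le> 1" for n unfolding AS_del_def
  proof (rule Sup_le_helper)
    fix T T' :: "'a list" assume a: "length T = n \<and> length T' + 1 = n \<and> ed T T' = 1"
    then show "ereal (delta T' - delta T) \<le> 1" using diff1[of T T'] by simp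
  qed
  then show "limsup (\<lambda>n. AS_del (delta :: 'a list \<Rightarrow> real) n) \<le> 1"
    by (intro Limsup_bounded) simp
qed

end
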